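(* Let $N\ge1$, $\phi_r\in\mathbb{R}$, $\sigma_r^2>0$. For $t=1,\dots,T$ independently let $\theta_t\sim\mathcal{N}(\phi_r,\sigma_r^2)$ and conditionally on $\theta_t$ let $x_{t,1},\dots,x_{t,N}$ be independent $\mathcal{N}(\theta_t,1)$. Let $\bar x_t=\frac1N\sum_n x_{t,n}$, $\bar x=\frac1T\sum_t\bar x_t$, $S=\frac1T\sum_t(\bar x_t-\bar x)^2$, and consider gradient descent on $\sigma^2\mapsto\ell_{\mathrm{joint}}(\hat\theta_{1:T}(\sigma^2),\hat\phi(\sigma^2),\sigma^2)$, where $$\ell_{\mathrm{joint}}(\theta_{1:T},\phi,\sigma^2)=\frac T2\log\sigma^2+\frac12\sum_{t=1}^T\frac{(\theta_t-\phi)^2}{\sigma^2}+\frac12\sum_{t=1}^T\sum_{n=1}^N(x_{t,n}-\theta_t)^2$$ and $(\hat\phi(\sigma^2),\hat\theta_{1:T}(\sigma^2))$ minimizes $\ell_{\mathrm{joint}}$ over $(\phi,\theta_{1:T})$; this diverges to $0^+$ when $S<4/N$ or when $\sigma^2$ is initialized in $\big(0,\tfrac12(S-\tfrac2N-\sqrt{S(S-\tfrac4N)})\big)$, and otherwise converges to $\tfrac12(S-\tfrac2N+\sqrt{S(S-\tfrac4N)})$. Then as $T\to\infty$, the condition $S<\frac4N$ becomes equivalent to $\sigma_r^2<\frac3N$, the upper endpoint of the initialization interval becomes $$\tfrac12\Big(\sigma_r^2-\tfrac1N-\sqrt{(\sigma_r^2+\tfrac1N)(\sigma_r^2-\tfrac3N)}\Big),$$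 and beyond this endpoint the $\sigma^2$ estimate converges to $$\hat\sigma^2=\tfrac12\Big(\sigma_r^2-\tfrac1N+\sqrt{(\sigma_r^2+\tfrac1N)(\sigma_r^2-\tfrac3N)}\Big).$$
   Context: The limits as $T\to\infty$ are in probability (they follow from $S\to\sigma_r^2+\tfrac1N$). *)

theory Defs
  imports "HOL-Probability.Probability"
begin

definition conv_in_prob :: "'a measure \<Rightarrow> (nat \<Rightarrow> 'a \<Rightarrow> real) \<Rightarrow> real \<Rightarrow> bool" where
  "conv_in_prob M X c \<longleftrightarrow>
     (\<forall>e>0. (\<lambda>T. measure M {\<omega> \<in> space M. \<bar>X T \<omega> - c\<bar> > e}) \<longlonglongrightarrow> 0)"

definition group_mean :: "nat \<Rightarrow> (nat \<Rightarrow> nat \<Rightarrow> 'a \<Rightarrow> real) \<Rightarrow> nat \<Rightarrow> 'a \<Rightarrow> real" where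
  "group_mean N x t \<omega> = (\<Sum>n<N. x t n \<omega>) / real N"

definition grand_mean :: "nat \<Rightarrow> (nat \<Rightarrow> nat \<Rightarrow> 'a \<Rightarrow> real) \<Rightarrow> nat \<Rightarrow> 'a \<Rightarrow> real" where
  "grand_mean N x T \<omega> = (\<Sum>t<T. group_mean N x t \<omega>) / real T"

definition stat_S :: "nat \<Rightarrow> (nat \<Rightarrow> nat \<Rightarrow> 'a \<Rightarrow> real) \<Rightarrow> nat \<Rightarrow> 'a \<Rightarrow> real" where
  "stat_S N x T \<omega> = (\<Sum>t<T. (group_mean N x t \<omega> - grand_mean N x T \<omega>)\<^sup>2) / real T"

text \<open>Upper endpoint of the divergent initialization interval, and the limit of gradient descent
  on the profiled joint loss, as functions of S (from the preceding result).\<close>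
definition gd_lower_endpoint :: "nat \<Rightarrow> real \<Rightarrow> real" where
  "gd_lower_endpoint N s = (s - 2 / real N - sqrt (s * (s - 4 / real N))) / 2"

definition gd_limit :: "nat \<Rightarrow> real \<Rightarrow> real" where
  "gd_limit N s = (s - 2 / real N + sqrt (s * (s - 4 / real N))) / 2"

end

theory Submission
  imports Defs
begin


lemma (in prob_space) sq_sum_expectation:
  fixes U :: "nat \<Rightarrow> 'a \<Rightarrow> real"
  assumes indep: "indep_vars (\<lambda>_. borel) U UNIV"
    and int: "\<And>t. integrable M (\<lambda>\<omega>. (U t \<omega>)\<^sup>2)"
    and mean0: "\<And>t. expectation (U t) = 0"
    and var: "\<And>t. expectation (\<lambda>\<omega>. (U t \<omega>)\<^sup>2) = c"
  shows "integrable M (\<lambda>\<omega>. (\<Sum>t<T. U t \<omega>)\<^sup>2)"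
    and "expectation (\<lambda>\<omega>. (\<Sum>t<T. U t \<omega>)\<^sup>2) = real T * c"
proof -
  have rv[measurable]: "\<And>t. U t \<in> borel_measurable M"
    using indep unfolding indep_vars_def by auto
  have int1: "integrable M (U t)" for t
    by (rule square_integrable_imp_integrable[OF rv int])
  have ind2: "indep_vars (\<lambda>_. borel) U {s,t}" for s t
    by (rule indep_vars_subset[OF indep]) simp
  have intp: "integrable M (\<lambda>\<omega>. U s \<omega> * U t \<omega>)" for s t
  proof (cases "s = t")
    case True then show ?thesis using int[of t] by (simp add: power2_eq_square)
  next
    case False
    have "integrable M (\<lambda>\<omega>. \<Prod>i\<in>{s,t}. U i \<omega>)"
      by (rule indep_vars_integrable[OF _ ind2]) (simp_all add: int1)
    then show ?thesis using False by simp
  qed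
  have ep: "expectation (\<lambda>\<omega>. U s \<omega> * U t \<omega>) = (if s = t then c else 0)" for s t
  proof (cases "s = t")
    case True then show ?thesis using var[of t] by (simp add: power2_eq_square)
  next
    case False
    have "expectation (\<lambda>\<omega>. \<Prod>i\<in>{s,t}. U i \<omega>) = (\<Prod>i\<in>{s,t}. expectation (U i))"
      by (rule indep_vars_lebesgue_integral[OF _ ind2]) (simp_all add: int1)
    then show ?thesis using False mean0 by simp
  qed
  have eq: "(\<lambda>\<omega>. (\<Sum>t<T. U t \<omega>)\<^sup>2) = (\<lambda>\<omega>. \<Sum>s<T. \<Sum>t<T. U s \<omega> * U t \<omega>)"
    by (rule ext) (simp only: power2_eq_square sum_product)
  show "integrable M (\<lambda>\<omega>. (\<Sum>t<T. U t \<omega>)\<^sup>2)"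
    unfolding eq by (intro Bochner_Integration.integrable_sum intp)
  have "expectation (\<lambda>\<omega>. \<Sum>s<T. \<Sum>t<T. U s \<omega> * U t \<omega>) = (\<Sum>s<T. expectation (\<lambda>\<omega>. \<Sum>t<T. U s \<omega> * U t \<omega>))"
    by (intro Bochner_Integration.integral_sum Bochner_Integration.integrable_sum intp)
  also have "\<dots> = (\<Sum>s<T. \<Sum>t<T. expectation (\<lambda>\<omega>. U s \<omega> * U t \<omega>))"
    by (intro sum.cong refl Bochner_Integration.integral_sum intp)
  also have "\<dots> = (\<Sum>s<T. c)"
    unfolding ep by (intro sum.cong refl) simp
  finally show "expectation (\<lambda>\<omega>. (\<Sum>t<T. U t \<omega>)\<^sup>2) = real T * c"
    unfolding eq by simp
qed



lemma (in prob_space) wlln: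
  fixes U :: "nat \<Rightarrow> 'a \<Rightarrow> real"
  assumes indep: "indep_vars (\<lambda>_. borel) U UNIV"
    and int: "\<And>t. integrable M (\<lambda>\<omega>. (U t \<omega>)\<^sup>2)"
    and mean0: "\<And>t. expectation (U t) = 0"
    and var: "\<And>t. expectation (\<lambda>\<omega>. (U t \<omega>)\<^sup>2) = c"
    and e: "e > 0"
  shows "(\<lambda>T. prob {\<omega>\<in>space M. \<bar>(\<Sum>t<T. U t \<omega>) / real T\<bar> \<ge> e}) \<longlonglongrightarrow> 0"
proof -
  have rv[measurable]: "\<And>t. U t \<in> borel_measurable M"
    using indep unfolding indep_vars_def by auto
  have int1: "integrable M (U t)" for t
    by (rule square_integrable_imp_integrable[OF rv int])
  note S = sq_sum_expectation[OF indep int mean0 var]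
  have bound: "prob {\<omega>\<in>space M. \<bar>(\<Sum>t<T. U t \<omega>) / real T\<bar> \<ge> e} \<le> c / (real T * e\<^sup>2)"
    if T: "T \<ge> 1" for T
  proof -
    let ?f = "\<lambda>\<omega>. (\<Sum>t<T. U t \<omega>) / real T"
    have "integrable M (\<lambda>\<omega>. (\<Sum>t<T. U t \<omega>)\<^sup>2 / (real T)\<^sup>2)"
      using S(1)[of T] by (rule Bochner_Integration.integrable_divide)
    then have intf: "integrable M (\<lambda>\<omega>. (?f \<omega>)\<^sup>2)"
      by (simp only: power_divide)
    have Ef: "expectation ?f = 0"
    proof -
      have "expectation ?f = expectation (\<lambda>\<omega>. \<Sum>t<T. U t \<omega>) / real T"
        by (rule Bochner_Integration.integral_divide_zero)
      also have "expectation (\<lambda>\<omega>. \<Sum>t<T. U t \<omega>) = (\<Sum>t<T. expectation (U t))"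
        by (rule Bochner_Integration.integral_sum) (rule int1)
      finally show ?thesis using mean0 by simp
    qed
    have "variance ?f = expectation (\<lambda>\<omega>. (\<Sum>t<T. U t \<omega>)\<^sup>2 / (real T)\<^sup>2)"
      unfolding Ef by (simp only: power_divide diff_zero)
    also have "\<dots> = expectation (\<lambda>\<omega>. (\<Sum>t<T. U t \<omega>)\<^sup>2) / (real T)\<^sup>2"
      by (rule Bochner_Integration.integral_divide_zero)
    also have "\<dots> = c / real T"
      using S(2)[of T] T by (simp add: power2_eq_square)
    finally have V: "variance ?f = c / real T" .
    have Ch: "prob {\<omega>\<in>space M. \<bar>?f \<omega> - expectation ?f\<bar> \<ge> e} \<le> variance ?f / e\<^sup>2"
      by (rule Chebyshev_inequality) (measurable, rule intf, rule e)
    have "prob {\<omega>\<in>space M. \<bar>?f \<omega> - expectation ?f\<bar> \<ge> e} \<le> c / real T / e\<^sup>2"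
      using Ch by (simp only: V)
    then have "prob {\<omega>\<in>space M. \<bar>?f \<omega> - 0\<bar> \<ge> e} \<le> c / real T / e\<^sup>2"
      by (simp only: Ef)
    then show ?thesis by (simp only: diff_zero divide_divide_eq_left)
  qed
  have lim: "(\<lambda>T. c / (real T * e\<^sup>2)) \<longlonglongrightarrow> 0"
  proof -
    have "(\<lambda>T. (c / e\<^sup>2) * inverse (real T)) \<longlonglongrightarrow> (c / e\<^sup>2) * 0"
      by (intro tendsto_mult tendsto_const tendsto_inverse_0_at_top filterlim_real_sequentially)
    moreover have "(\<lambda>T. (c / e\<^sup>2) * inverse (real T)) = (\<lambda>T. c / (real T * e\<^sup>2))"
      by (rule ext) (simp add: divide_inverse mult.commute)
    ultimately show ?thesis by simp
  qed
  show ?thesis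
  proof (rule tendsto_sandwich[OF _ _ tendsto_const lim])
    show "\<forall>\<^sub>F T in sequentially. 0 \<le> prob {\<omega>\<in>space M. \<bar>(\<Sum>t<T. U t \<omega>) / real T\<bar> \<ge> e}"
      by (rule always_eventually) (rule allI, rule measure_nonneg)
    show "\<forall>\<^sub>F T in sequentially. prob {\<omega>\<in>space M. \<bar>(\<Sum>t<T. U t \<omega>) / real T\<bar> \<ge> e} \<le> c / (real T * e\<^sup>2)"
      using eventually_ge_at_top[of 1] by (rule eventually_mono) (rule bound)
  qed
qed



lemma (in prob_space) conv_in_prob_cont:
  fixes X :: "nat \<Rightarrow> 'a \<Rightarrow> real"
  assumes conv: "conv_in_prob M X c"
    and meas: "\<And>T. X T \<in> borel_measurable M"
    and cont: "isCont g c"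
  shows "conv_in_prob M (\<lambda>T \<omega>. g (X T \<omega>)) (g c)"
  unfolding conv_in_prob_def
proof (intro allI impI)
  fix e :: real assume e: "e > 0"
  obtain d where d: "d > 0" and dg: "\<And>y. \<bar>y - c\<bar> < d \<Longrightarrow> \<bar>g y - g c\<bar> < e"
  proof -
    have "\<forall>e>0. \<exists>d>0. \<forall>y. y \<noteq> c \<and> norm (y - c) < d \<longrightarrow> norm (g y - g c) < e"
      using cont unfolding isCont_def LIM_eq by simp
    then obtain d where "d > 0" "\<And>y. y \<noteq> c \<Longrightarrow> norm (y - c) < d \<Longrightarrow> norm (g y - g c) < e"
      using e by blast
    note dd = this
    have "\<bar>g y - g c\<bar> < e" if "\<bar>y - c\<bar> < d" for y
    proof (cases "y = c")
      case True then show ?thesis using e by simp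
    next
      case False then show ?thesis using dd(2)[of y] that by simp
    qed
    then show ?thesis using that dd(1) by blast
  qed
  have lim: "(\<lambda>T. measure M {\<omega> \<in> space M. \<bar>X T \<omega> - c\<bar> > d / 2}) \<longlonglongrightarrow> 0"
  proof -
    have "d / 2 > 0" using d by simp
    then show ?thesis using conv unfolding conv_in_prob_def by blast
  qed
  show "(\<lambda>T. measure M {\<omega> \<in> space M. \<bar>g (X T \<omega>) - g c\<bar> > e}) \<longlonglongrightarrow> 0"
  proof (rule tendsto_sandwich[OF _ _ tendsto_const lim])
    show "\<forall>\<^sub>F T in sequentially. 0 \<le> measure M {\<omega> \<in> space M. \<bar>g (X T \<omega>) - g c\<bar> > e}"
      by simp
    show "\<forall>\<^sub>F T in sequentially. measure M {\<omega> \<in> space M. \<bar>g (X T \<omega>) - g c\<bar> > e}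
        \<le> measure M {\<omega> \<in> space M. \<bar>X T \<omega> - c\<bar> > d / 2}"
    proof (intro always_eventually allI finite_measure_mono)
      fix T
      have [measurable]: "X T \<in> borel_measurable M" by (rule meas)
      show "{\<omega> \<in> space M. \<bar>X T \<omega> - c\<bar> > d / 2} \<in> sets M" by measurable
      show "{\<omega> \<in> space M. \<bar>g (X T \<omega>) - g c\<bar> > e} \<subseteq> {\<omega> \<in> space M. \<bar>X T \<omega> - c\<bar> > d / 2}"
      proof safe
        fix \<omega> assume "\<omega> \<in> space M" "\<bar>g (X T \<omega>) - g c\<bar> > e"
        show "\<bar>X T \<omega> - c\<bar> > d / 2"
        proof (rule ccontr)
          assume "\<not> \<bar>X T \<omega> - c\<bar> > d / 2"
          then have "\<bar>X T \<omega> - c\<bar> < d" using d by linarith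
          then have "\<bar>g (X T \<omega>) - g c\<bar> < e" by (rule dg)
          then show False using \<open>\<bar>g (X T \<omega>) - g c\<bar> > e\<close> by linarith
        qed
      qed
    qed
  qed
qed



lemma var_identity:
  fixes w :: "nat \<Rightarrow> real"
  assumes T: "T > 0"
  shows "(\<Sum>t<T. (w t - (\<Sum>s<T. w s) / real T)\<^sup>2) / real T
         = (\<Sum>t<T. (w t)\<^sup>2) / real T - ((\<Sum>t<T. w t) / real T)\<^sup>2"
proof -
  define B where "B = (\<Sum>s<T. w s) / real T"
  have sB: "(\<Sum>s<T. w s) = real T * B" using T by (simp add: B_def)
  have "(\<Sum>t<T. (w t - B)\<^sup>2) = (\<Sum>t<T. (w t)\<^sup>2) - 2 * B * (\<Sum>t<T. w t) + real T * B\<^sup>2"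
    by (simp add: power2_diff sum.distrib sum_subtractf sum_distrib_left ac_simps)
  also have "\<dots> = (\<Sum>t<T. (w t)\<^sup>2) - real T * B\<^sup>2"
    unfolding sB by (simp add: power2_eq_square)
  finally have "(\<Sum>t<T. (w t - B)\<^sup>2) = (\<Sum>t<T. (w t)\<^sup>2) - real T * B\<^sup>2" .
  then show ?thesis unfolding B_def[symmetric] using T by (simp add: diff_divide_distrib)
qed

theorem corollary1:
  fixes M :: "'a measure" and N :: nat and \<phi>r sr2 :: real
    and \<theta> :: "nat \<Rightarrow> 'a \<Rightarrow> real" and x :: "nat \<Rightarrow> nat \<Rightarrow> 'a \<Rightarrow> real"
  assumes "prob_space M"
    and "N \<ge> 1" and "sr2 > 0"
    and "\<And>t. distributed M lborel (\<theta> t) (normal_density \<phi>r (sqrt sr2))"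
    and "\<And>t n. n < N \<Longrightarrow> distributed M lborel (\<lambda>\<omega>. x t n \<omega> - \<theta> t \<omega>) (normal_density 0 1)"
    and "prob_space.indep_vars M (\<lambda>_. borel)
           (\<lambda>i \<omega>. case i of Inl t \<Rightarrow> \<theta> t \<omega> | Inr (t, n) \<Rightarrow> x t n \<omega> - \<theta> t \<omega>)
           (range Inl \<union> Inr ` (UNIV \<times> {..<N}))"
  shows "(sr2 < 3 / real N \<longrightarrow>
            (\<lambda>T. measure M {\<omega> \<in> space M. stat_S N x T \<omega> < 4 / real N}) \<longlonglongrightarrow> 1)
       \<and> (sr2 > 3 / real N \<longrightarrow>
            (\<lambda>T. measure M {\<omega> \<in> space M. stat_S N x T \<omega> < 4 / real N}) \<longlonglongrightarrow> 0)
       \<and> (sr2 \<ge> 3 / real N \<longrightarrow>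
            conv_in_prob M (\<lambda>T \<omega>. gd_lower_endpoint N (stat_S N x T \<omega>))
              ((sr2 - 1 / real N - sqrt ((sr2 + 1 / real N) * (sr2 - 3 / real N))) / 2)
          \<and> conv_in_prob M (\<lambda>T \<omega>. gd_limit N (stat_S N x T \<omega>))
              ((sr2 - 1 / real N + sqrt ((sr2 + 1 / real N) * (sr2 - 3 / real N))) / 2))"
proof -
  interpret P: prob_space M by fact
  note thd = assms(4) and ed = assms(5) and indep = assms(6)
  define X where "X = (\<lambda>i \<omega>. case i of Inl t \<Rightarrow> \<theta> t \<omega> | Inr (t, n) \<Rightarrow> x t n \<omega> - \<theta> t \<omega>)"
  define J :: "(nat + nat \<times> nat) set" where "J = range Inl \<union> Inr ` (UNIV \<times> {..<N})"
  have indepX: "P.indep_vars (\<lambda>_. borel) X J" using indep unfolding X_def J_def .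
  have Npos: "real N > 0" using assms(2) by simp
  define v where "v = sr2 + 1 / real N"
  have vpos: "v > 0" unfolding v_def using assms(3) Npos by (simp add: add_pos_pos)
  define K where "K t = insert (Inl t) ((\<lambda>n. Inr (t,n)) ` {..<N})" for t :: nat
  define c where "c i = (case i of Inl _ \<Rightarrow> 1 | Inr _ \<Rightarrow> 1 / real N)" for i :: "nat + nat \<times> nat"
  define Z where "Z t = group_mean N x t" for t
  have KJ: "K t \<subseteq> J" for t
    unfolding K_def J_def by auto
  have finK: "finite (K t)" for t unfolding K_def by simp
  have Zsum: "Z t \<omega> = (\<Sum>i\<in>K t. c i * X i \<omega>)" for t \<omega>
  proof -
    have nin: "Inl t \<notin> (\<lambda>n. Inr (t,n)) ` {..<N}" by auto
    have inj: "inj_on (\<lambda>n. Inr (t,n) :: nat + nat \<times> nat) {..<N}" by (auto simp: inj_on_def)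
    have "(\<Sum>i\<in>K t. c i * X i \<omega>) = \<theta> t \<omega> + (\<Sum>n<N. (x t n \<omega> - \<theta> t \<omega>) / real N)"
      unfolding K_def by (simp add: sum.insert[OF _ nin] sum.reindex[OF inj] c_def X_def)
    also have "\<dots> = (\<Sum>n<N. x t n \<omega>) / real N"
      using Npos by (simp add: sum_divide_distrib[symmetric] sum_subtractf field_simps)
    also have "\<dots> = Z t \<omega>" by (simp add: Z_def group_mean_def)
    finally show ?thesis ..
  qed
  have Znormal: "distributed M lborel (Z t) (normal_density \<phi>r (sqrt v))" for t
  proof -
    define \<mu> where "\<mu> i = (case i of Inl _ \<Rightarrow> \<phi>r | Inr _ \<Rightarrow> 0)" for i :: "nat + nat \<times> nat"
    define \<sigma> where "\<sigma> i = (case i of Inl _ \<Rightarrow> sqrt sr2 | Inr _ \<Rightarrow> 1 / real N)" for i :: "nat + nat \<times> nat"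
    have nin: "Inl t \<notin> (\<lambda>n. Inr (t,n)) ` {..<N}" by auto
    have inj: "inj_on (\<lambda>n. Inr (t,n) :: nat + nat \<times> nat) {..<N}" by (auto simp: inj_on_def)
    have ind: "P.indep_vars (\<lambda>_. borel) (\<lambda>i \<omega>. c i * X i \<omega>) (K t)"
      by (rule P.indep_vars_compose2[OF P.indep_vars_subset[OF indepX KJ]]) simp
    have sp: "0 < \<sigma> i" if "i \<in> K t" for i
      using that assms(3) Npos unfolding K_def \<sigma>_def by auto
    have nd: "distributed M lborel (\<lambda>\<omega>. c i * X i \<omega>) (normal_density (\<mu> i) (\<sigma> i))"
      if "i \<in> K t" for i
    proof -
      from that consider "i = Inl t" | n where "n < N" "i = Inr (t,n)" unfolding K_def by auto
      then show ?thesis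
      proof cases
        case 1 then show ?thesis using thd[of t] by (simp add: c_def X_def \<mu>_def \<sigma>_def)
      next
        case (2 n)
        have "distributed M lborel (\<lambda>\<omega>. 0 + (1/real N) * (x t n \<omega> - \<theta> t \<omega>))
                (normal_density (0 + (1/real N) * 0) (\<bar>1/real N\<bar> * 1))"
          by (rule P.normal_density_affine[OF ed[OF \<open>n<N\<close>]]) (use Npos in simp_all)
        then show ?thesis using 2 Npos by (simp add: c_def X_def \<mu>_def \<sigma>_def)
      qed
    qed
    have "distributed M lborel (\<lambda>\<omega>. \<Sum>i\<in>K t. c i * X i \<omega>)
            (normal_density (\<Sum>i\<in>K t. \<mu> i) (sqrt (\<Sum>i\<in>K t. (\<sigma> i)\<^sup>2)))"
      by (rule P.sum_indep_normal[OF finK _ ind sp nd]) (simp_all add: K_def)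
    moreover have "(\<Sum>i\<in>K t. \<mu> i) = \<phi>r"
      unfolding K_def by (simp add: sum.insert[OF _ nin] sum.reindex[OF inj] \<mu>_def)
    moreover have "(\<Sum>i\<in>K t. (\<sigma> i)\<^sup>2) = v"
      unfolding K_def using assms(3) Npos
      by (simp add: sum.insert[OF _ nin] sum.reindex[OF inj] \<sigma>_def v_def power2_eq_square)
    moreover have "(\<lambda>\<omega>. \<Sum>i\<in>K t. c i * X i \<omega>) = Z t" using Zsum by (simp add: fun_eq_iff)
    ultimately show ?thesis by simp
  qed
  have Zindep: "P.indep_vars (\<lambda>_. borel) Z UNIV"
  proof -
    have disj: "disjoint_family_on K UNIV"
      unfolding disjoint_family_on_def K_def by auto
    have R: "P.indep_vars (\<lambda>j. PiM (K j) (\<lambda>_. borel)) (\<lambda>j \<omega>. restrict (\<lambda>i. X i \<omega>) (K j)) UNIV"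
      by (rule P.indep_vars_restrict[OF indepX KJ disj])
    have meas: "(\<lambda>f. \<Sum>i\<in>K j. c i * f i) \<in> borel_measurable (PiM (K j) (\<lambda>_. borel))" for j
    proof (rule borel_measurable_sum)
      fix i assume "i \<in> K j"
      show "(\<lambda>f. c i * f i) \<in> borel_measurable (PiM (K j) (\<lambda>_. borel))"
        by (rule borel_measurable_times[OF borel_measurable_const measurable_component_singleton[OF \<open>i \<in> K j\<close>]])
    qed
    have "P.indep_vars (\<lambda>_. borel) (\<lambda>j \<omega>. (\<lambda>f. \<Sum>i\<in>K j. c i * f i) (restrict (\<lambda>i. X i \<omega>) (K j))) UNIV"
      by (rule P.indep_vars_compose2[OF R meas])
    moreover have "(\<lambda>j \<omega>. (\<lambda>f. \<Sum>i\<in>K j. c i * f i) (restrict (\<lambda>i. X i \<omega>) (K j))) = Z"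
      by (simp add: fun_eq_iff Zsum)
    ultimately show ?thesis by simp
  qed
  define W where "W = (\<lambda>t \<omega>. Z t \<omega> - \<phi>r)"
  define U2 where "U2 = (\<lambda>t \<omega>. (W t \<omega>)\<^sup>2 - v)"
  define nd where "nd = normal_density 0 (sqrt v)"
  have Wd: "distributed M lborel (W t) nd" for t
  proof -
    have "distributed M lborel (\<lambda>\<omega>. (-\<phi>r) + 1 * Z t \<omega>) (normal_density (-\<phi>r + 1 * \<phi>r) (\<bar>1\<bar> * sqrt v))"
      by (rule P.normal_density_affine[OF Znormal]) (use vpos in simp_all)
    moreover have "(\<lambda>\<omega>. (-\<phi>r) + 1 * Z t \<omega>) = W t" by (simp add: fun_eq_iff W_def)
    ultimately show ?thesis by (simp add: nd_def)
  qed
  have Zm[measurable]: "Z t \<in> borel_measurable M" for t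
    using distributed_measurable[OF Znormal[of t]] by simp
  have Wm[measurable]: "W t \<in> borel_measurable M" for t
    using distributed_measurable[OF Wd[of t]] by simp
  have Windep: "P.indep_vars (\<lambda>_. borel) W UNIV"
  proof -
    have "P.indep_vars (\<lambda>_. borel) (\<lambda>t \<omega>. (\<lambda>z. z - \<phi>r) (Z t \<omega>)) UNIV"
      by (rule P.indep_vars_compose2[OF Zindep]) measurable
    then show ?thesis by (simp add: W_def)
  qed
  have U2indep: "P.indep_vars (\<lambda>_. borel) U2 UNIV"
  proof -
    have "P.indep_vars (\<lambda>_. borel) (\<lambda>t \<omega>. (\<lambda>z. z\<^sup>2 - v) (W t \<omega>)) UNIV"
      by (rule P.indep_vars_compose2[OF Windep]) measurable
    then show ?thesis by (simp add: U2_def)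
  qed
  have ndnn: "0 \<le> nd y" for y unfolding nd_def by simp
  have ndm[measurable]: "nd \<in> borel_measurable lborel" unfolding nd_def by simp
  have EW: "P.expectation (W t) = 0" for t
    by (rule P.normal_distributed_expectation[OF _ Wd[unfolded nd_def]]) (use vpos in simp)
  have intlb2: "integrable lborel (\<lambda>y. nd y * y\<^sup>2)"
    using integrable_normal_moment[where \<sigma>="sqrt v" and \<mu>=0 and k=2] vpos by (simp add: nd_def)
  have intlb4: "integrable lborel (\<lambda>y. nd y * y ^ 4)"
    using integrable_normal_moment[where \<sigma>="sqrt v" and \<mu>=0 and k=4] vpos by (simp add: nd_def)
  have intlb0: "integrable lborel nd"
    using integrable_normal_density[where \<sigma>="sqrt v" and \<mu>=0] vpos by (simp add: nd_def)
  have intW2: "integrable M (\<lambda>\<omega>. (W t \<omega>)\<^sup>2)" for t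
  proof -
    have "integrable lborel (\<lambda>y. nd y * y\<^sup>2) \<longleftrightarrow> integrable M (\<lambda>\<omega>. (W t \<omega>)\<^sup>2)"
      by (rule distributed_integrable[OF Wd]) (simp_all add: ndnn)
    then show ?thesis using intlb2 by simp
  qed
  have EW2: "P.expectation (\<lambda>\<omega>. (W t \<omega>)\<^sup>2) = v" for t
  proof -
    have "P.variance (W t) = (sqrt v)\<^sup>2"
      by (rule P.normal_distributed_variance[OF _ Wd[unfolded nd_def]]) (use vpos in simp)
    then show ?thesis using EW[of t] vpos by simp
  qed
  have intlbU: "integrable lborel (\<lambda>y. nd y * (y\<^sup>2 - v)\<^sup>2)"
  proof -
    have "integrable lborel (\<lambda>y. nd y * y ^ 4 - 2 * v * (nd y * y\<^sup>2) + v\<^sup>2 * nd y)"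
      using intlb0 intlb2 intlb4 by simp
    moreover have "(\<lambda>y. nd y * y ^ 4 - 2 * v * (nd y * y\<^sup>2) + v\<^sup>2 * nd y) = (\<lambda>y. nd y * (y\<^sup>2 - v)\<^sup>2)"
      by (rule ext) (simp add: power2_eq_square algebra_simps power4_eq_xxxx)
    ultimately show ?thesis by simp
  qed
  have intU2: "integrable M (\<lambda>\<omega>. (U2 t \<omega>)\<^sup>2)" for t
  proof -
    have "integrable lborel (\<lambda>y. nd y * (y\<^sup>2 - v)\<^sup>2) \<longleftrightarrow> integrable M (\<lambda>\<omega>. ((W t \<omega>)\<^sup>2 - v)\<^sup>2)"
      by (rule distributed_integrable[OF Wd]) (simp_all add: ndnn)
    then show ?thesis using intlbU by (simp add: U2_def)
  qed
  define c2 where "c2 = (\<integral>y. nd y * (y\<^sup>2 - v)\<^sup>2 \<partial>lborel)"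
  have EU2sq: "P.expectation (\<lambda>\<omega>. (U2 t \<omega>)\<^sup>2) = c2" for t
  proof -
    have "(\<integral>y. nd y * (y\<^sup>2 - v)\<^sup>2 \<partial>lborel) = P.expectation (\<lambda>\<omega>. ((W t \<omega>)\<^sup>2 - v)\<^sup>2)"
      by (rule distributed_integral[OF Wd]) (simp_all add: ndnn)
    then show ?thesis by (simp add: U2_def c2_def)
  qed
  have EU2: "P.expectation (U2 t) = 0" for t
  proof -
    have "P.expectation (U2 t) = P.expectation (\<lambda>\<omega>. (W t \<omega>)\<^sup>2) - P.expectation (\<lambda>\<omega>. v)"
      unfolding U2_def by (rule Bochner_Integration.integral_diff[OF intW2]) simp
    then show ?thesis using EW2[of t] by (simp add: P.prob_space)
  qed
  note L1 = P.wlln[OF Windep intW2 EW EW2]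
  note L2 = P.wlln[OF U2indep intU2 EU2 EU2sq]
  have Sid: "stat_S N x T \<omega> = (\<Sum>t<T. (W t \<omega>)\<^sup>2) / real T - ((\<Sum>t<T. W t \<omega>) / real T)\<^sup>2" for T \<omega>
  proof (cases "T = 0")
    case True then show ?thesis by (simp add: stat_S_def)
  next
    case False
    have gm: "grand_mean N x T \<omega> = (\<Sum>t<T. W t \<omega>) / real T + \<phi>r"
      using False by (simp add: grand_mean_def W_def Z_def sum_subtractf field_simps)
    have "stat_S N x T \<omega> = (\<Sum>t<T. (W t \<omega> - (\<Sum>s<T. W s \<omega>) / real T)\<^sup>2) / real T"
      unfolding stat_S_def gm by (simp add: W_def Z_def algebra_simps)
    also have "\<dots> = (\<Sum>t<T. (W t \<omega>)\<^sup>2) / real T - ((\<Sum>t<T. W t \<omega>) / real T)\<^sup>2"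
      by (rule var_identity) (use False in simp)
    finally show ?thesis .
  qed
  have Sm[measurable]: "stat_S N x T \<in> borel_measurable M" for T
  proof -
    have "(\<lambda>\<omega>. (\<Sum>t<T. (W t \<omega>)\<^sup>2) / real T - ((\<Sum>t<T. W t \<omega>) / real T)\<^sup>2) \<in> borel_measurable M"
      by measurable
    moreover have "stat_S N x T = (\<lambda>\<omega>. (\<Sum>t<T. (W t \<omega>)\<^sup>2) / real T - ((\<Sum>t<T. W t \<omega>) / real T)\<^sup>2)"
      using Sid by (simp add: fun_eq_iff)
    ultimately show ?thesis by simp
  qed
  have Sconv: "conv_in_prob M (stat_S N x) v"
    unfolding conv_in_prob_def
  proof (intro allI impI)
    fix e :: real assume e: "e > 0"
    define e1 where "e1 = min 1 (e / 2)"
    have e1: "e1 > 0" "e1 \<le> 1" "e1 \<le> e / 2" using e by (auto simp: e1_def)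
    have L1': "(\<lambda>T. P.prob {\<omega>\<in>space M. \<bar>(\<Sum>t<T. W t \<omega>) / real T\<bar> \<ge> e1}) \<longlonglongrightarrow> 0"
      by (rule L1) (rule e1(1))
    have L2': "(\<lambda>T. P.prob {\<omega>\<in>space M. \<bar>(\<Sum>t<T. U2 t \<omega>) / real T\<bar> \<ge> e / 2}) \<longlonglongrightarrow> 0"
      by (rule L2) (use e in simp)
    show "(\<lambda>T. measure M {\<omega> \<in> space M. \<bar>stat_S N x T \<omega> - v\<bar> > e}) \<longlonglongrightarrow> 0"
    proof (rule tendsto_sandwich[OF _ _ tendsto_const tendsto_add_zero[OF L2' L1']])
      show "\<forall>\<^sub>F T in sequentially. 0 \<le> measure M {\<omega> \<in> space M. \<bar>stat_S N x T \<omega> - v\<bar> > e}"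
        by (rule always_eventually) (rule allI, rule measure_nonneg)
      have bnd: "measure M {\<omega> \<in> space M. \<bar>stat_S N x T \<omega> - v\<bar> > e}
          \<le> P.prob {\<omega>\<in>space M. \<bar>(\<Sum>t<T. U2 t \<omega>) / real T\<bar> \<ge> e / 2}
            + P.prob {\<omega>\<in>space M. \<bar>(\<Sum>t<T. W t \<omega>) / real T\<bar> \<ge> e1}"
        if T: "T \<ge> 1" for T
      proof -
        let ?A = "{\<omega>\<in>space M. \<bar>(\<Sum>t<T. U2 t \<omega>) / real T\<bar> \<ge> e / 2}"
        let ?B = "{\<omega>\<in>space M. \<bar>(\<Sum>t<T. W t \<omega>) / real T\<bar> \<ge> e1}"
        have Am: "?A \<in> sets M" unfolding U2_def by measurable
        have Bm: "?B \<in> sets M" by measurable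
        have sub: "{\<omega> \<in> space M. \<bar>stat_S N x T \<omega> - v\<bar> > e} \<subseteq> ?A \<union> ?B"
        proof (rule subsetI)
          fix \<omega> assume "\<omega> \<in> {\<omega> \<in> space M. \<bar>stat_S N x T \<omega> - v\<bar> > e}"
          then have om: "\<omega> \<in> space M" "\<bar>stat_S N x T \<omega> - v\<bar> > e" by auto
          show "\<omega> \<in> ?A \<union> ?B"
          proof (cases "\<omega> \<in> ?B")
            case True then show ?thesis by blast
          next
            case nB: False
          define B where "B = (\<Sum>t<T. W t \<omega>) / real T"
          define A where "A = (\<Sum>t<T. U2 t \<omega>) / real T"
          have Bl: "\<bar>B\<bar> < e1" using nB om(1) by (auto simp: B_def)
          have Aeq: "A = (\<Sum>t<T. (W t \<omega>)\<^sup>2) / real T - v"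
            using T by (simp add: A_def U2_def sum_subtractf diff_divide_distrib)
          have Seq: "stat_S N x T \<omega> - v = A - B\<^sup>2"
            unfolding Sid Aeq B_def by simp
          have "B\<^sup>2 = \<bar>B\<bar> * \<bar>B\<bar>" by (simp add: power2_eq_square abs_mult[symmetric])
          also have "\<dots> \<le> \<bar>B\<bar> * 1" using Bl e1 by (intro mult_left_mono) auto
          finally have B2: "B\<^sup>2 < e / 2" using Bl e1 by simp
          have "B\<^sup>2 \<ge> 0" by simp
          then have "\<bar>A\<bar> \<ge> e / 2" using om(2) B2 unfolding Seq by linarith
          then show ?thesis using om(1) by (simp add: A_def)
          qed
        qed
        have "measure M {\<omega> \<in> space M. \<bar>stat_S N x T \<omega> - v\<bar> > e} \<le> measure M (?A \<union> ?B)"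
          by (rule P.finite_measure_mono[OF sub]) (use Am Bm in simp)
        also have "\<dots> \<le> measure M ?A + measure M ?B"
          by (rule measure_subadditive[OF Am Bm]) (simp_all add: P.emeasure_eq_measure)
        finally show ?thesis .
      qed
      show "\<forall>\<^sub>F T in sequentially. measure M {\<omega> \<in> space M. \<bar>stat_S N x T \<omega> - v\<bar> > e}
          \<le> P.prob {\<omega>\<in>space M. \<bar>(\<Sum>t<T. U2 t \<omega>) / real T\<bar> \<ge> e / 2}
            + P.prob {\<omega>\<in>space M. \<bar>(\<Sum>t<T. W t \<omega>) / real T\<bar> \<ge> e1}"
        using eventually_ge_at_top[of 1] by (rule eventually_mono) (rule bnd)
    qed
  qed
  have h4: "4 / real N = 3 / real N + 1 / real N"
    by (simp add: add_divide_distrib[symmetric])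
  have part1: "(\<lambda>T. measure M {\<omega> \<in> space M. stat_S N x T \<omega> < 4 / real N}) \<longlonglongrightarrow> 1"
    if lt: "sr2 < 3 / real N"
  proof -
    define e where "e = (4 / real N - v) / 2"
    have e: "e > 0" using lt unfolding e_def v_def h4 by simp
    have p: "(\<lambda>T. measure M {\<omega> \<in> space M. \<bar>stat_S N x T \<omega> - v\<bar> > e}) \<longlonglongrightarrow> 0"
      using Sconv e unfolding conv_in_prob_def by blast
    have lim1: "(\<lambda>T. 1 - measure M {\<omega> \<in> space M. \<bar>stat_S N x T \<omega> - v\<bar> > e}) \<longlonglongrightarrow> 1 - 0"
      by (intro tendsto_diff tendsto_const p)
    show ?thesis
    proof (rule tendsto_sandwich[OF _ _ lim1[simplified] tendsto_const])
      show "\<forall>\<^sub>F T in sequentially. measure M {\<omega> \<in> space M. stat_S N x T \<omega> < 4 / real N} \<le> 1"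
        by (rule always_eventually) (rule allI, rule P.prob_le_1)
      show "\<forall>\<^sub>F T in sequentially. 1 - measure M {\<omega> \<in> space M. \<bar>stat_S N x T \<omega> - v\<bar> > e}
              \<le> measure M {\<omega> \<in> space M. stat_S N x T \<omega> < 4 / real N}"
      proof (rule always_eventually, rule allI)
        fix T
        let ?A = "{\<omega> \<in> space M. \<bar>stat_S N x T \<omega> - v\<bar> > e}"
        have Am: "?A \<in> sets M" by measurable
        have Cm: "{\<omega> \<in> space M. stat_S N x T \<omega> < 4 / real N} \<in> sets M" by measurable
        have "1 - measure M ?A = measure M (space M - ?A)"
          using P.prob_compl[OF Am] by simp
        also have "\<dots> \<le> measure M {\<omega> \<in> space M. stat_S N x T \<omega> < 4 / real N}"
        proof (rule P.finite_measure_mono[OF _ Cm])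
          show "space M - ?A \<subseteq> {\<omega> \<in> space M. stat_S N x T \<omega> < 4 / real N}"
          proof
            fix \<omega> assume "\<omega> \<in> space M - ?A"
            then have om: "\<omega> \<in> space M" "\<bar>stat_S N x T \<omega> - v\<bar> \<le> e" by auto
            then have "stat_S N x T \<omega> \<le> v + e" by (simp add: abs_le_iff)
            moreover have "v + e < 4 / real N"
            proof -
              have "2 * e = 4 / real N - v" unfolding e_def by simp
              then show ?thesis using e by linarith
            qed
            ultimately show "\<omega> \<in> {\<omega> \<in> space M. stat_S N x T \<omega> < 4 / real N}" using om(1) by simp
          qed
        qed
        finally show "1 - measure M ?A \<le> measure M {\<omega> \<in> space M. stat_S N x T \<omega> < 4 / real N}" .
      qed
    qed
  qed
  have part2: "(\<lambda>T. measure M {\<omega> \<in> space M. stat_S N x T \<omega> < 4 / real N}) \<longlonglongrightarrow> 0"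
    if gt: "sr2 > 3 / real N"
  proof -
    define e where "e = (v - 4 / real N) / 2"
    have e: "e > 0" using gt unfolding e_def v_def h4 by simp
    have p: "(\<lambda>T. measure M {\<omega> \<in> space M. \<bar>stat_S N x T \<omega> - v\<bar> > e}) \<longlonglongrightarrow> 0"
      using Sconv e unfolding conv_in_prob_def by blast
    show ?thesis
    proof (rule tendsto_sandwich[OF _ _ tendsto_const p])
      show "\<forall>\<^sub>F T in sequentially. 0 \<le> measure M {\<omega> \<in> space M. stat_S N x T \<omega> < 4 / real N}"
        by (rule always_eventually) (rule allI, rule measure_nonneg)
      show "\<forall>\<^sub>F T in sequentially. measure M {\<omega> \<in> space M. stat_S N x T \<omega> < 4 / real N}
              \<le> measure M {\<omega> \<in> space M. \<bar>stat_S N x T \<omega> - v\<bar> > e}"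
      proof (rule always_eventually, rule allI)
        fix T
        have Am: "{\<omega> \<in> space M. \<bar>stat_S N x T \<omega> - v\<bar> > e} \<in> sets M" by measurable
        show "measure M {\<omega> \<in> space M. stat_S N x T \<omega> < 4 / real N}
              \<le> measure M {\<omega> \<in> space M. \<bar>stat_S N x T \<omega> - v\<bar> > e}"
          by (rule P.finite_measure_mono[OF _ Am]) (use e in \<open>auto simp: e_def\<close>)
      qed
    qed
  qed
  have eq1: "v - 2 / real N = sr2 - 1 / real N"
    unfolding v_def by (simp add: diff_divide_distrib[symmetric])
  have eq2: "v * (v - 4 / real N) = (sr2 + 1 / real N) * (sr2 - 3 / real N)"
    unfolding v_def h4 by (simp add: algebra_simps)
  have part3: "conv_in_prob M (\<lambda>T \<omega>. gd_lower_endpoint N (stat_S N x T \<omega>))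
              ((sr2 - 1 / real N - sqrt ((sr2 + 1 / real N) * (sr2 - 3 / real N))) / 2)"
  proof -
    have "isCont (gd_lower_endpoint N) v"
      unfolding gd_lower_endpoint_def[abs_def] by (intro continuous_intros) auto
    from P.conv_in_prob_cont[OF Sconv Sm this]
    show ?thesis by (simp add: gd_lower_endpoint_def eq1 eq2)
  qed
  have part4: "conv_in_prob M (\<lambda>T \<omega>. gd_limit N (stat_S N x T \<omega>))
              ((sr2 - 1 / real N + sqrt ((sr2 + 1 / real N) * (sr2 - 3 / real N))) / 2)"
  proof -
    have "isCont (gd_limit N) v"
      unfolding gd_limit_def[abs_def] by (intro continuous_intros) auto
    from P.conv_in_prob_cont[OF Sconv Sm this]
    show ?thesis by (simp add: gd_limit_def eq1 eq2)
  qed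
  show ?thesis using part1 part2 part3 part4 by blast
qed


end
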